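(* Let $\mathcal{G}=(\mathcal{V},\mathcal{E},\mathcal{W})$ be an undirected weighted graph in which exactly one edge $e_-=(u,v)$ has negative weight and all other edges have positive weight. Let $\mathcal{G}_+=(\mathcal{V},\mathcal{E}\setminus\{e_-\},\mathcal{W})$ and assume $\mathcal{G}_+$ is connected. Then $L(\mathcal{G})$ is positive semi-definite if and only if $|\mathcal{W}(e_-)|\le \mathcal{R}_{uv}(\mathcal{G}_+)^{-1}$.
   Context: Weights $\mathcal{W}:\mathcal{E}\to\mathbb{R}\setminus\{0\}$; $W$ is the diagonal weight matrix; with an arbitrary edge orientation the incidence matrix $E$ has in the column of edge $(i,j)$ entry $+1$ in row $i$, $-1$ in row $j$, $0$ elsewhere; $L(\mathcal{G})=EWE^T$. For a weighted graph $\mathcal{H}$ on $\mathcal{V}$, the effective resistance between nodes $u,v$ is $\mathcal{R}_{uv}(\mathcal{H})=(\mathbf{e}_u-\mathbf{e}_v)^TL^{\dagger}(\mathcal{H})(\mathbf{e}_u-\mathbf{e}_v)$, where $L^{\dagger}$ is the Moore–Penrose pseudo-inverse and $\mathbf{e}_u$ is the standard basis vector of node $u$. *)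

theory Defs
  imports "HOL-Analysis.Analysis"
begin

text \<open>Vertices are the elements of a finite type 'n. An undirected graph is given by
  a set of edges, each stored with an arbitrary orientation as an ordered pair (i,j).\<close>

definition outer :: "real^'n \<Rightarrow> real^'n^'n" where
  "outer x = (\<chi> a b. x $ a * x $ b)"

definition inc_col :: "'n::finite \<times> 'n \<Rightarrow> real^'n" where
  "inc_col e = axis (fst e) 1 - axis (snd e) 1"

text \<open>L = E W E^T, written as the sum over the edges of w_e b_e b_e^T.\<close>
definition laplacian :: "('n::finite \<times> 'n) set \<Rightarrow> ('n \<times> 'n \<Rightarrow> real) \<Rightarrow> real^'n^'n" where
  "laplacian Es W = (\<Sum>e\<in>Es. W e *\<^sub>R outer (inc_col e))"

definition pinv :: "real^'n::finite^'n \<Rightarrow> real^'n^'n" where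
  "pinv A = (THE X. A ** X ** A = A \<and> X ** A ** X = X \<and>
                    transpose (A ** X) = A ** X \<and> transpose (X ** A) = X ** A)"

definition eff_res :: "('n::finite \<times> 'n) set \<Rightarrow> ('n \<times> 'n \<Rightarrow> real) \<Rightarrow> 'n \<Rightarrow> 'n \<Rightarrow> real" where
  "eff_res Es W u v = (axis u 1 - axis v 1) \<bullet> (pinv (laplacian Es W) *v (axis u 1 - axis v 1))"

definition psd :: "real^'n::finite^'n \<Rightarrow> bool" where
  "psd A \<longleftrightarrow> (\<forall>x. 0 \<le> x \<bullet> (A *v x))"

definition graph_connected :: "('n \<times> 'n) set \<Rightarrow> bool" where
  "graph_connected Es \<longleftrightarrow> (\<forall>a b. (\<lambda>x y. (x, y) \<in> Es \<or> (y, x) \<in> Es)\<^sup>*\<^sup>* a b)"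

end

theory Submission imports Defs begin

definition onev :: "real^'n::finite" where "onev = (\<chi> i. 1)"

lemma inc_inner: "inc_col e \<bullet> x = x $ fst e - x $ snd e"
  by (simp add: inc_col_def inner_diff_left inner_axis')

lemma inc_onev: "inc_col e \<bullet> onev = 0"
  by (simp add: inc_inner onev_def)

lemma outer_mv: "outer a *v x = (a \<bullet> x) *\<^sub>R a"
  by (simp add: vec_eq_iff outer_def matrix_vector_mult_def inner_vec_def sum_distrib_left mult.commute mult.left_commute)

lemma sum_mv: "finite S \<Longrightarrow> (\<Sum>i\<in>S. f i) *v x = (\<Sum>i\<in>S. f i *v x)"
  by (induction S rule: finite_induct) (auto simp: matrix_vector_mult_add_rdistrib)

lemma lap_mv: "laplacian Es W *v x = (\<Sum>e\<in>Es. (W e * (inc_col e \<bullet> x)) *\<^sub>R inc_col e)"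
  unfolding laplacian_def
  by (simp add: sum_mv scaleR_matrix_vector_assoc[symmetric] outer_mv)

lemma lap_inner: "y \<bullet> (laplacian Es W *v x) = (\<Sum>e\<in>Es. W e * (inc_col e \<bullet> y) * (inc_col e \<bullet> x))"
  by (simp add: lap_mv inner_sum_right inner_commute mult.commute mult.left_commute)

lemma lap_onev: "laplacian Es W *v onev = 0"
  by (simp add: lap_mv inc_onev)

lemma onev_lap: "onev \<bullet> (laplacian Es W *v x) = 0"
  by (simp add: lap_inner inc_onev)

lemma onev_onev: "onev \<bullet> (onev :: real^'n::finite) = real CARD('n)"
  by (simp add: onev_def inner_vec_def)

lemma penrose_unique:
  fixes A X Y :: "real^'n::finite^'n"
  assumes X: "A ** X ** A = A" "X ** A ** X = X" "transpose (A ** X) = A ** X" "transpose (X ** A) = X ** A"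
  and Y: "A ** Y ** A = A" "Y ** A ** Y = Y" "transpose (A ** Y) = A ** Y" "transpose (Y ** A) = Y ** A"
  shows "X = Y"
proof -
  have tA: "transpose A = transpose A ** transpose Y ** transpose A"
    using Y(1) by (metis matrix_transpose_mul matrix_mul_assoc)
  have "X = X ** (A ** X)" using X(2) by (simp add: matrix_mul_assoc)
  also have "\<dots> = X ** (transpose X ** transpose A)" using X(3) by (metis matrix_transpose_mul)
  also have "\<dots> = X ** (transpose X ** (transpose A ** transpose Y ** transpose A))" using tA by simp
  also have "\<dots> = X ** (transpose (A ** X) ** transpose (A ** Y))"
    by (simp add: matrix_transpose_mul matrix_mul_assoc)
  also have "\<dots> = X ** (A ** X) ** (A ** Y)" using X(3) Y(3) by (simp add: matrix_mul_assoc)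
  also have "\<dots> = X ** A ** Y" using X(2) by (simp add: matrix_mul_assoc)
  finally have 1: "X = X ** A ** Y" .
  have tA2: "transpose A = transpose A ** transpose X ** transpose A"
    using X(1) by (metis matrix_transpose_mul matrix_mul_assoc)
  have "Y = (Y ** A) ** Y" using Y(2) by (simp add: matrix_mul_assoc)
  also have "\<dots> = (transpose A ** transpose Y) ** Y" using Y(4) by (metis matrix_transpose_mul)
  also have "\<dots> = ((transpose A ** transpose X ** transpose A) ** transpose Y) ** Y" using tA2 by simp
  also have "\<dots> = (transpose (X ** A) ** transpose (Y ** A)) ** Y"
    by (simp add: matrix_transpose_mul matrix_mul_assoc)
  also have "\<dots> = (X ** A) ** (Y ** A) ** Y" using X(4) Y(4) by simp
  also have "\<dots> = X ** A ** Y" using Y(2) by (metis matrix_mul_assoc)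
  finally show ?thesis using 1 by simp
qed

definition Pm :: "real^'n::finite^'n" where
  "Pm = (1 / real CARD('n)) *\<^sub>R outer onev"

lemma Pm_mv: "Pm *v x = ((onev \<bullet> x) / real CARD('n)) *\<^sub>R (onev :: real^'n::finite)"
  by (simp add: Pm_def scaleR_matrix_vector_assoc[symmetric] outer_mv)

lemma Pm_Pm: "Pm *v (Pm *v x) = Pm *v (x :: real^'n::finite)"
  by (simp add: Pm_mv inner_scaleR_right onev_onev)

lemma transpose_I_Pm: "transpose (mat 1 - Pm) = mat 1 - (Pm :: real^'n::finite^'n)"
  by (simp add: vec_eq_iff transpose_def mat_def Pm_def outer_def onev_def)

lemma pinv_construct:
  fixes A :: "real^'n::finite^'n"
  assumes Aone: "A *v onev = 0" and oneA: "\<And>x. onev \<bullet> (A *v x) = 0"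
    and psdA: "\<And>x. 0 \<le> x \<bullet> (A *v x)"
    and ker: "\<And>x. x \<bullet> (A *v x) = 0 \<Longrightarrow> \<exists>c. x = c *\<^sub>R onev"
  shows "A ** pinv A = mat 1 - Pm"
proof -
  define M where "M = A + Pm"
  have n0: "real CARD('n) > 0" by simp
  have APm: "A *v (Pm *v x) = 0" for x by (simp add: Pm_mv Aone matrix_vector_mult_scaleR)
  have PmA: "Pm *v (A *v x) = 0" for x by (simp add: Pm_mv oneA)
  have "\<forall>x. M *v x = 0 \<longrightarrow> x = 0"
  proof (intro allI impI)
    fix x assume "M *v x = 0"
    hence "x \<bullet> (M *v x) = 0" by simp
    hence e: "x \<bullet> (A *v x) + (onev \<bullet> x)^2 / real CARD('n) = 0"
      by (simp add: M_def matrix_vector_mult_add_rdistrib inner_add_right Pm_mv inner_commute power2_eq_square)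
    have "(onev \<bullet> x)^2 / real CARD('n) \<ge> 0" by simp
    with e psdA[of x] have a: "x \<bullet> (A *v x) = 0" and b: "(onev \<bullet> x)^2 / real CARD('n) = 0" by linarith+
    from ker[OF a] obtain c where c: "x = c *\<^sub>R onev" by blast
    from b n0 have "onev \<bullet> x = 0" by simp
    with c have "c * real CARD('n) = 0" by (simp add: onev_onev)
    with n0 have "c = 0" by simp
    with c show "x = 0" by simp
  qed
  then obtain B where BM: "B ** M = mat 1" using matrix_left_invertible_ker by blast
  hence MB: "M ** B = mat 1" using matrix_left_right_inverse by blast
  have BMv: "B *v (M *v x) = x" for x using BM by (simp add: matrix_vector_mul_assoc)
  have MBv: "M *v (B *v x) = x" for x using MB by (simp add: matrix_vector_mul_assoc)
  have MPm: "M *v (Pm *v z) = Pm *v z" for z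
    by (simp add: M_def matrix_vector_mult_add_rdistrib APm Pm_Pm)
  have BPm: "B *v (Pm *v z) = Pm *v z" for z using BMv[of "Pm *v z"] MPm[of z] by simp
  have PmM: "Pm *v (M *v z) = Pm *v z" for z
    by (simp add: M_def matrix_vector_mult_add_rdistrib PmA Pm_Pm vec.add)
  have PmB: "Pm *v (B *v y) = Pm *v y" for y using PmM[of "B *v y"] MBv[of y] by simp
  define X where "X = B - Pm"
  have AX: "A ** X = mat 1 - Pm"
  proof -
    have "(A ** X) *v x = (mat 1 - Pm) *v x" for x
    proof -
      have "M *v (B *v x) = A *v (B *v x) + Pm *v (B *v x)"
        by (simp add: M_def matrix_vector_mult_add_rdistrib)
      then show ?thesis
        by (simp add: X_def matrix_vector_mul_assoc[symmetric] matrix_vector_mult_diff_rdistrib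
             vec.diff APm MBv PmB algebra_simps)
    qed
    thus ?thesis by (simp add: matrix_eq)
  qed
  have XA: "X ** A = mat 1 - Pm"
  proof -
    have "(X ** A) *v x = (mat 1 - Pm) *v x" for x
    proof -
      have "A *v x = M *v x - Pm *v x" by (simp add: M_def matrix_vector_mult_add_rdistrib)
      then show ?thesis
        by (simp add: X_def matrix_vector_mul_assoc[symmetric] matrix_vector_mult_diff_rdistrib
             vec.diff PmA BMv BPm PmM Pm_Pm)
    qed
    thus ?thesis by (simp add: matrix_eq)
  qed
  have P1: "A ** X ** A = A"
  proof -
    have "(A ** X ** A) *v x = A *v x" for x
      by (simp add: AX matrix_vector_mul_assoc[symmetric] matrix_vector_mult_diff_rdistrib PmA)
    thus ?thesis by (simp add: matrix_eq)
  qed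
  have P2: "X ** A ** X = X"
  proof -
    have "(X ** A ** X) *v x = X *v x" for x
    proof -
      have "(X ** A ** X) *v x = (X ** A) *v (X *v x)" by (simp add: matrix_vector_mul_assoc)
      also have "\<dots> = X *v x - Pm *v (X *v x)" by (simp add: XA matrix_vector_mult_diff_rdistrib)
      also have "Pm *v (X *v x) = 0" by (simp add: X_def matrix_vector_mult_diff_rdistrib vec.diff PmB Pm_Pm)
      finally show ?thesis by simp
    qed
    thus ?thesis by (simp add: matrix_eq)
  qed
  have "pinv A = X"
    unfolding pinv_def
  proof (rule the_equality)
    show "A ** X ** A = A \<and> X ** A ** X = X \<and> transpose (A ** X) = A ** X \<and> transpose (X ** A) = X ** A"
      using P1 P2 AX XA transpose_I_Pm by simp
  next
    fix Y assume "A ** Y ** A = A \<and> Y ** A ** Y = Y \<and> transpose (A ** Y) = A ** Y \<and> transpose (Y ** A) = Y ** A"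
    then show "Y = X" using penrose_unique[of A Y X] P1 P2 AX XA transpose_I_Pm by simp
  qed
  with AX show ?thesis by simp
qed

lemma nn3: "0 < (c::real) \<Longrightarrow> 0 \<le> c * a * a"
  by (simp add: mult.assoc)

lemma lap_psd:
  assumes "\<forall>e\<in>Es. W e > 0"
  shows "0 \<le> x \<bullet> (laplacian Es W *v x)"
  unfolding lap_inner using assms
  by (intro sum_nonneg) (simp add: nn3)

lemma conn_ker:
  assumes conn: "graph_connected Es" and pos: "\<forall>e\<in>Es. W e > 0"
    and z: "x \<bullet> (laplacian Es W *v x) = 0"
  shows "\<exists>c. x = c *\<^sub>R onev"
proof -
  have fin: "finite Es" by simp
  define f where "f e = W e * (inc_col e \<bullet> x) * (inc_col e \<bullet> x)" for e
  have "sum f Es = 0" using z by (simp add: lap_inner f_def)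
  moreover have "\<forall>e\<in>Es. 0 \<le> f e" using pos by (simp add: nn3 f_def)
  ultimately have "\<forall>e\<in>Es. f e = 0"
    using sum_nonneg_eq_0_iff[OF fin, of f] by blast
  hence zz: "\<forall>e\<in>Es. W e * (inc_col e \<bullet> x) * (inc_col e \<bullet> x) = 0" by (simp add: f_def)
  have edge: "x $ a = x $ b" if ab: "(a, b) \<in> Es" for a b
  proof -
    have "W (a,b) * (inc_col (a,b) \<bullet> x) * (inc_col (a,b) \<bullet> x) = 0" using ab zz by blast
    moreover have "W (a,b) > 0" using pos ab by blast
    ultimately have "inc_col (a,b) \<bullet> x = 0" by simp
    thus ?thesis by (simp add: inc_inner)
  qed
  have "x $ a = x $ b" for a b
  proof -
    have "(\<lambda>x y. (x, y) \<in> Es \<or> (y, x) \<in> Es)\<^sup>*\<^sup>* a b" using conn by (simp add: graph_connected_def)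
    then show ?thesis
    proof (induction rule: rtranclp_induct)
      case base show ?case by simp
    next
      case (step y z) then show ?case using edge by metis
    qed
  qed
  note all = this
  have "x = (x $ a0) *\<^sub>R onev" for a0
  proof (rule vec_eq_iff[THEN iffD2], intro allI)
    fix i show "x $ i = ((x $ a0) *\<^sub>R onev) $ i" using all[of i a0] by (simp add: onev_def)
  qed
  thus ?thesis by blast
qed

theorem theorem2:
  fixes Es :: "('n::finite \<times> 'n) set" and W :: "'n \<times> 'n \<Rightarrow> real" and u v :: 'n
  assumes no_loops: "\<forall>(a, b)\<in>Es. a \<noteq> b"
    and undirected: "\<forall>(a, b)\<in>Es. (b, a) \<notin> Es"
    and neg_edge: "(u, v) \<in> Es" "W (u, v) < 0"
    and pos_rest: "\<forall>e\<in>Es - {(u, v)}. W e > 0"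
    and conn: "graph_connected (Es - {(u, v)})"
  shows "psd (laplacian Es W) \<longleftrightarrow> \<bar>W (u, v)\<bar> \<le> inverse (eff_res (Es - {(u, v)}) W u v)"
proof -
  define E' where "E' = Es - {(u, v)}"
  define L' where "L' = laplacian E' W"
  define b where "b = inc_col (u, v)"
  define w where "w = W (u, v)"
  have uv: "u \<noteq> v" using no_loops neg_edge(1) by auto
  have bdef: "b = axis u 1 - axis v 1" by (simp add: b_def inc_col_def)
  have Lsplit: "laplacian Es W = L' + w *\<^sub>R outer b"
    unfolding laplacian_def L'_def E'_def b_def w_def
    using sum.remove[of Es "(u,v)" "\<lambda>e. W e *\<^sub>R outer (inc_col e)"] neg_edge(1)
    by (simp add: add.commute)
  have Lform: "x \<bullet> (laplacian Es W *v x) = x \<bullet> (L' *v x) + w * (b \<bullet> x)^2" for x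
    by (simp add: Lsplit matrix_vector_mult_add_rdistrib inner_add_right
        scaleR_matrix_vector_assoc[symmetric] outer_mv inner_commute power2_eq_square)
  have psd': "0 \<le> x \<bullet> (L' *v x)" for x
    unfolding L'_def using lap_psd pos_rest E'_def by blast
  have ker': "x \<bullet> (L' *v x) = 0 \<Longrightarrow> \<exists>c. x = c *\<^sub>R onev" for x
    unfolding L'_def using conn_ker conn pos_rest E'_def by blast
  have LX: "L' ** pinv L' = mat 1 - Pm"
    unfolding L'_def
    by (rule pinv_construct) (simp_all add: lap_onev onev_lap psd'[unfolded L'_def] ker'[unfolded L'_def])
  define y where "y = pinv L' *v b"
  define R where "R = eff_res E' W u v"
  have Ry: "R = b \<bullet> y" by (simp add: R_def eff_res_def y_def L'_def bdef)
  have Ly: "L' *v y = b"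
  proof -
    have "L' *v y = (L' ** pinv L') *v b" by (simp add: y_def matrix_vector_mul_assoc)
    also have "\<dots> = b - Pm *v b" by (simp add: LX matrix_vector_mult_diff_rdistrib)
    also have "Pm *v b = 0" by (simp add: Pm_mv b_def inner_commute[of onev] inc_onev)
    finally show ?thesis by simp
  qed
  have Rq: "R = y \<bullet> (L' *v y)" using Ry Ly by (simp add: inner_commute)
  have Rpos: "R > 0"
  proof -
    have "R \<noteq> 0"
    proof
      assume "R = 0"
      then obtain c where c: "y = c *\<^sub>R onev" using ker' Rq by auto
      hence "L' *v y = 0" by (simp add: L'_def matrix_vector_mult_scaleR lap_onev)
      hence "b = 0" using Ly by simp
      hence "b $ u = 0" by simp
      thus False using uv by (simp add: bdef axis_def)
    qed
    thus ?thesis using psd'[of y] Rq by linarith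
  qed
  have bil: "b \<bullet> x = (\<Sum>e\<in>E'. W e * (inc_col e \<bullet> x) * (inc_col e \<bullet> y))" for x
  proof -
    have "b \<bullet> x = x \<bullet> (L' *v y)" using Ly by (simp add: inner_commute)
    thus ?thesis by (simp add: L'_def lap_inner)
  qed
  have CS: "(b \<bullet> x)^2 \<le> R * (x \<bullet> (L' *v x))" for x
  proof -
    define \<alpha> where "\<alpha> e = inc_col e \<bullet> x" for e
    define \<beta> where "\<beta> e = inc_col e \<bullet> y" for e
    define Q where "Q = (\<Sum>e\<in>E'. W e * \<alpha> e * \<alpha> e)"
    define Bxy where "Bxy = (\<Sum>e\<in>E'. W e * \<alpha> e * \<beta> e)"
    have RQ: "R = (\<Sum>e\<in>E'. W e * \<beta> e * \<beta> e)" using Rq by (simp add: L'_def lap_inner \<beta>_def)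
    have Qx: "x \<bullet> (L' *v x) = Q" by (simp add: L'_def lap_inner Q_def \<alpha>_def)
    have bx: "b \<bullet> x = Bxy" using bil by (simp add: Bxy_def \<alpha>_def \<beta>_def)
    define t where "t = Bxy / R"
    have "0 \<le> (\<Sum>e\<in>E'. W e * (\<alpha> e - t * \<beta> e)^2)"
      using pos_rest E'_def by (intro sum_nonneg) (simp add: less_imp_le)
    also have "(\<Sum>e\<in>E'. W e * (\<alpha> e - t * \<beta> e)^2) = Q - 2 * t * Bxy + t^2 * R"
    proof -
      have "(\<Sum>e\<in>E'. W e * (\<alpha> e - t * \<beta> e)^2) =
            (\<Sum>e\<in>E'. W e * \<alpha> e * \<alpha> e - 2 * t * (W e * \<alpha> e * \<beta> e) + t^2 * (W e * \<beta> e * \<beta> e))"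
        by (rule sum.cong) (simp_all add: power2_eq_square algebra_simps)
      also have "\<dots> = Q - 2 * t * Bxy + t^2 * R"
        by (simp add: sum.distrib sum_subtractf sum_distrib_left[symmetric] Q_def Bxy_def RQ)
      finally show ?thesis .
    qed
    finally have "0 \<le> Q - 2 * t * Bxy + t^2 * R" .
    moreover have tR: "t * R = Bxy" using Rpos by (simp add: t_def)
    moreover have "t^2 * R = t * Bxy" using tR by (simp add: power2_eq_square mult.assoc)
    ultimately have "t * Bxy \<le> Q" by linarith
    hence "R * (t * Bxy) \<le> R * Q" using Rpos by (intro mult_left_mono) auto
    moreover have "R * (t * Bxy) = Bxy^2" using tR by (simp add: power2_eq_square mult.commute mult.left_commute)
    ultimately have "Bxy^2 \<le> R * Q" by simp
    thus ?thesis using Qx bx by simp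
  qed
  have "psd (laplacian Es W) \<longleftrightarrow> \<bar>w\<bar> \<le> inverse R"
  proof
    assume "psd (laplacian Es W)"
    hence "0 \<le> y \<bullet> (L' *v y) + w * (b \<bullet> y)^2" using Lform by (simp add: psd_def)
    hence "0 \<le> R + w * R^2" using Rq Ry by simp
    hence "0 \<le> R * (1 + w * R)" by (simp add: power2_eq_square algebra_simps)
    hence "0 \<le> 1 + w * R" using Rpos by (simp add: zero_le_mult_iff)
    hence "- w * R \<le> 1" by simp
    hence "- w \<le> 1 / R" using pos_le_divide_eq[OF Rpos] by blast
    hence "- w \<le> inverse R" by (simp add: inverse_eq_divide)
    thus "\<bar>w\<bar> \<le> inverse R" using neg_edge(2) w_def by simp
  next
    assume a: "\<bar>w\<bar> \<le> inverse R"
    hence "- w \<le> 1 / R" using neg_edge(2) w_def by (simp add: inverse_eq_divide)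
    hence "- w * R \<le> 1" using pos_le_divide_eq[OF Rpos] by blast
    show "psd (laplacian Es W)" unfolding psd_def
    proof
      fix x
      have c: "(b \<bullet> x)^2 \<le> R * (x \<bullet> (L' *v x))" by (rule CS)
      have "- w * (b \<bullet> x)^2 \<le> - w * (R * (x \<bullet> (L' *v x)))"
        using c neg_edge(2) w_def by (intro mult_left_mono) auto
      also have "\<dots> = (- w * R) * (x \<bullet> (L' *v x))" by simp
      also have "\<dots> \<le> 1 * (x \<bullet> (L' *v x))"
        using \<open>- w * R \<le> 1\<close> psd'[of x] by (intro mult_right_mono) auto
      finally show "0 \<le> x \<bullet> (laplacian Es W *v x)" using Lform[of x] by simp
    qed
  qed
  thus ?thesis by (simp add: w_def R_def E'_def)
qed

end
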